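(* Let $t$ be an $\mathrm{SL}_2$-tiling and $n$ a positive integer. For each fixed $i\in\mathbb{Z}$ there are only finitely many $j\in\mathbb{Z}$ with $t_{ij}=n$, and for each fixed $j\in\mathbb{Z}$ there are only finitely many $i\in\mathbb{Z}$ with $t_{ij}=n$.
   Context: An $\mathrm{SL}_2$-tiling is a map $t:\mathbb{Z}\times\mathbb{Z}\to\{1,2,3,\dots\}$, $(i,j)\mapsto t_{ij}$, with $t_{ij}t_{i+1,j+1}-t_{i,j+1}t_{i+1,j}=1$ for all $i,j$. *)

theory Defs
  imports Main
begin

definition SL2_tiling :: "(int \<Rightarrow> int \<Rightarrow> int) \<Rightarrow> bool" where
  "SL2_tiling t \<longleftrightarrow> (\<forall>i j. t i j \<ge> 1) \<and>
     (\<forall>i j. t i j * t (i+1) (j+1) - t i (j+1) * t (i+1) j = 1)"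

end

theory Submission
  imports Defs
begin

lemma det_pos_aux:
  fixes a b :: "int \<Rightarrow> int"
  assumes bpos: "\<And>j. b j \<ge> 1"
    and adj: "\<And>j. a j * b (j+1) - a (j+1) * b j = 1"
  shows "a j * b (j + 1 + int d) - a (j + 1 + int d) * b j > 0"
proof (induction d)
  case 0 then show ?case using adj[of j] by simp
next
  case (Suc d)
  define k where "k = j + 1 + int d"
  have k1: "j + 1 + int (Suc d) = k + 1" by (simp add: k_def)
  have IH: "a j * b k - a k * b j > 0" using Suc k_def by simp
  have id: "b k * (a j * b (k+1) - a (k+1) * b j) =
     b (k+1) * (a j * b k - a k * b j) + b j * (a k * b (k+1) - a (k+1) * b k)"
    by (simp add: algebra_simps)
  have "b (k+1) * (a j * b k - a k * b j) > 0"
    using IH bpos[of "k+1"] by simp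
  moreover have "b j * (a k * b (k+1) - a (k+1) * b k) > 0"
    using adj[of k] bpos[of j] by simp
  ultimately have "b k * (a j * b (k+1) - a (k+1) * b j) > 0" using id by linarith
  then have "a j * b (k+1) - a (k+1) * b j > 0"
    using bpos[of k] by (simp add: zero_less_mult_iff)
  then show ?case unfolding k1 .
qed

lemma det_pos:
  fixes a b :: "int \<Rightarrow> int"
  assumes bpos: "\<And>j. b j \<ge> 1"
    and adj: "\<And>j. a j * b (j+1) - a (j+1) * b j = 1"
    and "j < k"
  shows "a j * b k - a k * b j > 0"
proof -
  obtain d where "k = j + 1 + int d"
  proof
    show "k = j + 1 + int (nat (k - j - 1))" using \<open>j < k\<close> by simp
  qed
  then show ?thesis using det_pos_aux[of b a, OF bpos adj] by simp
qed

lemma row_finite: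
  fixes t :: "int \<Rightarrow> int \<Rightarrow> int" and n :: int
  assumes pos: "\<And>i j. t i j \<ge> 1"
    and det: "\<And>i j. t i j * t (i+1) (j+1) - t i (j+1) * t (i+1) j = 1"
    and n: "n \<ge> 1"
  shows "finite {j. t i j = n}"
proof (cases "{j. t i j = n} = {}")
  case True then show ?thesis by simp
next
  case False
  then obtain j0 where j0: "t i j0 = n" by auto
  have D1: "\<And>j k. j < k \<Longrightarrow> t i j * t (i+1) k - t i k * t (i+1) j > 0"
    by (rule det_pos[where a="t i" and b="t (i+1)"]) (use pos det in auto)
  have D0: "\<And>j k. j < k \<Longrightarrow> t (i-1) j * t i k - t (i-1) k * t i j > 0"
  proof -
    fix j k :: int assume "j < k"
    show "t (i-1) j * t i k - t (i-1) k * t i j > 0"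
      using det_pos[where a="t (i-1)" and b="t i", OF _ _ \<open>j<k\<close>] pos det[of "i-1"] by simp
  qed
  define L where "L = {j. j < j0 \<and> t i j = n}"
  define U where "U = {j. j > j0 \<and> t i j = n}"
  have sub: "{j. t i j = n} \<subseteq> L \<union> {j0} \<union> U" unfolding L_def U_def by auto
  have Lm: "\<And>j k. j \<in> L \<Longrightarrow> k \<in> L \<union> {j0} \<Longrightarrow> j < k \<Longrightarrow> t (i+1) j < t (i+1) k"
  proof -
    fix j k assume "j \<in> L" "k \<in> L \<union> {j0}" "j < k"
    then have "t i j = n" "t i k = n" using j0 unfolding L_def by auto
    with D1[OF \<open>j<k\<close>] have "n * (t (i+1) k - t (i+1) j) > 0" by (simp add: algebra_simps)
    then show "t (i+1) j < t (i+1) k" using n by (simp add: zero_less_mult_iff)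
  qed
  have injL: "inj_on (t (i+1)) L"
  proof (rule inj_onI)
    fix x y assume "x \<in> L" "y \<in> L" "t (i+1) x = t (i+1) y"
    then show "x = y" using Lm[of x y] Lm[of y x] by (cases x y rule: linorder_cases) auto
  qed
  have "t (i+1) ` L \<subseteq> {1..t (i+1) j0}" using Lm pos unfolding L_def
    by (force simp: less_imp_le)
  then have fL: "finite L" using injL by (meson finite_atLeastAtMost_int finite_imageD finite_subset)
  have Um: "\<And>j k. j \<in> U \<union> {j0} \<Longrightarrow> k \<in> U \<Longrightarrow> j < k \<Longrightarrow> t (i-1) k < t (i-1) j"
  proof -
    fix j k assume "j \<in> U \<union> {j0}" "k \<in> U" "j < k"
    then have "t i j = n" "t i k = n" using j0 unfolding U_def by auto
    with D0[OF \<open>j<k\<close>] have "n * (t (i-1) j - t (i-1) k) > 0" by (simp add: algebra_simps)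
    then show "t (i-1) k < t (i-1) j" using n by (simp add: zero_less_mult_iff)
  qed
  have injU: "inj_on (t (i-1)) U"
  proof (rule inj_onI)
    fix x y assume "x \<in> U" "y \<in> U" "t (i-1) x = t (i-1) y"
    then show "x = y" using Um[of x y] Um[of y x] by (cases x y rule: linorder_cases) auto
  qed
  have "t (i-1) ` U \<subseteq> {1..t (i-1) j0}" using Um pos unfolding U_def
    by (force simp: less_imp_le)
  then have fU: "finite U" using injU by (meson finite_atLeastAtMost_int finite_imageD finite_subset)
  show ?thesis using sub fL fU by (meson finite_Un finite.intros finite_subset)
qed

theorem proposition6p1:
  fixes t :: "int \<Rightarrow> int \<Rightarrow> int" and n :: int
  assumes "SL2_tiling t" and "n \<ge> 1"
  shows "(\<forall>i. finite {j. t i j = n}) \<and> (\<forall>j. finite {i. t i j = n})"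
proof -
  have pos: "\<And>i j. t i j \<ge> 1" and det: "\<And>i j. t i j * t (i+1) (j+1) - t i (j+1) * t (i+1) j = 1"
    using assms(1) unfolding SL2_tiling_def by auto
  have A: "\<forall>i. finite {j. t i j = n}" using row_finite[of t, OF pos det assms(2)] by blast
  have det': "\<And>i j. t j i * t (j+1) (i+1) - t (j+1) i * t j (i+1) = 1"
    using det by (simp add: algebra_simps)
  have B: "\<forall>j. finite {i. t i j = n}"
    using row_finite[of "\<lambda>i j. t j i", OF pos det' assms(2)] by blast
  show ?thesis using A B by blast
qed

end
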